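(* Let $K_1,K_2$ be non-empty disjoint compact subsets of $\mathbf S^3$. There is $C\ge1$ such that for any $x\in K_1$, $y\in K_2$ and any $w\in\mathcal L_{\mathbb C}$ whose chain $L_w$ passes through $x$ and meets $K_2$, \[C^{-1}d(y,L_w)\le d_E(\pi_x(y),w)\le C\,d(y,L_w).\]
   Context: On $\mathbb{C}^3$: $u\cdot v=\sum u_i\bar v_i$, $\|u\|=\sqrt{u\cdot u}$, $\langle u,v\rangle=u_0\bar v_0-u_1\bar v_1-u_2\bar v_2$, $q(u)=\langle u,u\rangle$, $\|u\wedge v\|^2=\|u\|^2\|v\|^2-|u\cdot v|^2$. On $\mathbb P^2_{\mathbb C}$, $d_E(u,v)=\|u\wedge v\|/(\|u\|\|v\|)$. $\mathbf S^3=\{u:q(u)=0\}$ with visual metric $d(u,v)=\sqrt{|\langle u,v\rangle|/(\|u\|\|v\|)}$. $\mathcal L_{\mathbb C}=\{w:q(w)<0\}$; $w^\perp=\{u:\langle u,w\rangle=0\}$ and $L_w=w^\perp\cap\mathbf S^3$ (a chain). For $x\in\mathbf S^3$ and $y\in\mathbf S^3\setminus\{x\}$, $\pi_x(y)$ is the unique intersection point of the projective lines $x^\perp$ and $y^\perp$. $d(y,L_w)=\inf_{z\in L_w}d(y,z)$. *)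

theory Defs
  imports "HOL-Analysis.Analysis"
begin

text \<open>Points of the complex projective plane are represented by nonzero vectors of C^3;
  all quantities below are invariant under rescaling of representatives.\<close>

definition hdot :: "complex^3 \<Rightarrow> complex^3 \<Rightarrow> complex" where
  "hdot u v = (\<Sum>i\<in>UNIV. u$i * cnj (v$i))"

definition herm :: "complex^3 \<Rightarrow> complex^3 \<Rightarrow> complex" where
  "herm u v = u$0 * cnj (v$0) - u$1 * cnj (v$1) - u$2 * cnj (v$2)"

definition qform :: "complex^3 \<Rightarrow> real" where
  "qform u = Re (herm u u)"

definition wedge_norm :: "complex^3 \<Rightarrow> complex^3 \<Rightarrow> real" where
  "wedge_norm u v = sqrt ((norm u)^2 * (norm v)^2 - (cmod (hdot u v))^2)"

definition dE :: "complex^3 \<Rightarrow> complex^3 \<Rightarrow> real" where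
  "dE u v = wedge_norm u v / (norm u * norm v)"

definition S3 :: "(complex^3) set" where
  "S3 = {u. u \<noteq> 0 \<and> qform u = 0}"

definition dvis :: "complex^3 \<Rightarrow> complex^3 \<Rightarrow> real" where
  "dvis u v = sqrt (cmod (herm u v) / (norm u * norm v))"

definition LC :: "(complex^3) set" where
  "LC = {w. qform w < 0}"

definition chain :: "complex^3 \<Rightarrow> (complex^3) set" where
  "chain w = {u \<in> S3. herm u w = 0}"

definition dist_chain :: "complex^3 \<Rightarrow> complex^3 \<Rightarrow> real" where
  "dist_chain y w = (INF z\<in>chain w. dvis y z)"

definition proj_eq :: "complex^3 \<Rightarrow> complex^3 \<Rightarrow> bool" where
  "proj_eq u v \<longleftrightarrow> (\<exists>c::complex. c \<noteq> 0 \<and> v = c *s u)"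

text \<open>z represents pi_x(y): the intersection point of the projective lines x^perp and y^perp.\<close>
definition is_pi :: "complex^3 \<Rightarrow> complex^3 \<Rightarrow> complex^3 \<Rightarrow> bool" where
  "is_pi x y z \<longleftrightarrow> z \<noteq> 0 \<and> herm z x = 0 \<and> herm z y = 0"

end

theory Submission imports Defs begin

lemma three_eq_0: "(3::3) = 0" by simp

lemma sum3': "sum f (UNIV::3 set) = f 0 + f 1 + f 2"
  using sum_3[of f] three_eq_0 by (simp add: ac_simps)

lemma norm3: "(norm (u::complex^3))^2 = (cmod (u$0))^2 + (cmod (u$1))^2 + (cmod (u$2))^2"
  by (simp add: norm_vec_def L2_set_def sum3')

lemma hdot3: "hdot u v = u$0 * cnj (v$0) + u$1 * cnj (v$1) + u$2 * cnj (v$2)"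
  by (simp add: hdot_def sum3')

lemma cms: "complex_of_real ((cmod z)^2) = z * cnj z"
  by (metis complex_norm_square of_real_power)

lemma lag3: "(norm u)^2 * (norm v)^2 - (cmod (hdot u v))^2 =
   (cmod (u$0 * v$1 - u$1 * v$0))^2 + (cmod (u$0 * v$2 - u$2 * v$0))^2 + (cmod (u$1 * v$2 - u$2 * v$1))^2"
proof -
  have "complex_of_real ((norm u)^2 * (norm v)^2 - (cmod (hdot u v))^2) =
     complex_of_real ((cmod (u$0 * v$1 - u$1 * v$0))^2 + (cmod (u$0 * v$2 - u$2 * v$0))^2 + (cmod (u$1 * v$2 - u$2 * v$1))^2)"
    unfolding of_real_diff of_real_mult of_real_add norm3 cms hdot3
    by (simp add: algebra_simps)
  then show ?thesis using of_real_eq_iff by blast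
qed

lemma vec3_eq: "(u::'a^3) = v \<longleftrightarrow> u$0 = v$0 \<and> u$1 = v$1 \<and> u$2 = v$2"
  by (metis (full_types) exhaust_3 vec_eq_iff three_eq_0)


lemma lag2: "((cmod a1)^2 + (cmod a2)^2) * ((cmod b1)^2 + (cmod b2)^2) =
   (cmod (a1 * cnj b1 + a2 * cnj b2))^2 + (cmod (a1 * b2 - a2 * b1))^2"
proof -
  have "complex_of_real (((cmod a1)^2 + (cmod a2)^2) * ((cmod b1)^2 + (cmod b2)^2)) =
     complex_of_real ((cmod (a1 * cnj b1 + a2 * cnj b2))^2 + (cmod (a1 * b2 - a2 * b1))^2)"
    unfolding of_real_diff of_real_mult of_real_add cms
    by (simp add: algebra_simps)
  then show ?thesis using of_real_eq_iff by blast
qed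

lemma herm_scaleL[simp]: "herm (c *s u) v = c * herm u v"
  by (simp add: herm_def algebra_simps)
lemma herm_scaleR[simp]: "herm u (c *s v) = cnj c * herm u v"
  by (simp add: herm_def algebra_simps)
lemma herm_addL[simp]: "herm (u + w) v = herm u v + herm w v"
  by (simp add: herm_def algebra_simps)
lemma herm_addR[simp]: "herm u (v + w) = herm u v + herm u w"
  by (simp add: herm_def algebra_simps)
lemma herm_diffL[simp]: "herm (u - w) v = herm u v - herm w v"
  by (simp add: herm_def algebra_simps)
lemma herm_diffR[simp]: "herm u (v - w) = herm u v - herm u w"
  by (simp add: herm_def algebra_simps)
lemma herm_zeroL[simp]: "herm 0 v = 0" by (simp add: herm_def)
lemma herm_zeroR[simp]: "herm v 0 = 0" by (simp add: herm_def)
lemma herm_sym: "herm v u = cnj (herm u v)"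
  by (simp add: herm_def)
lemma cmod_herm_sym: "cmod (herm v u) = cmod (herm u v)"
  by (metis complex_mod_cnj herm_sym)

lemma hdot_scaleL[simp]: "hdot (c *s u) v = c * hdot u v"
  by (simp add: hdot3 algebra_simps)
lemma hdot_scaleR[simp]: "hdot u (c *s v) = cnj c * hdot u v"
  by (simp add: hdot3 algebra_simps)
lemma hdot_addL[simp]: "hdot (u + w) v = hdot u v + hdot w v"
  by (simp add: hdot3 algebra_simps)
lemma hdot_addR[simp]: "hdot u (v + w) = hdot u v + hdot u w"
  by (simp add: hdot3 algebra_simps)
lemma hdot_diffL[simp]: "hdot (u - w) v = hdot u v - hdot w v"
  by (simp add: hdot3 algebra_simps)
lemma hdot_diffR[simp]: "hdot u (v - w) = hdot u v - hdot u w"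
  by (simp add: hdot3 algebra_simps)
lemma hdot_sym: "hdot v u = cnj (hdot u v)"
  by (simp add: hdot3)
lemma cmod_hdot_sym: "cmod (hdot v u) = cmod (hdot u v)"
  by (metis complex_mod_cnj hdot_sym)
lemma hdot_self: "hdot u u = complex_of_real ((norm u)^2)"
  unfolding norm3 hdot3 of_real_add cms by simp

lemma qform3: "qform u = (cmod (u$0))^2 - (cmod (u$1))^2 - (cmod (u$2))^2"
proof -
  have "herm u u = complex_of_real ((cmod (u$0))^2 - (cmod (u$1))^2 - (cmod (u$2))^2)"
    unfolding herm_def of_real_diff cms by simp
  then show ?thesis unfolding qform_def by simp
qed

lemma herm_self: "herm u u = complex_of_real (qform u)"
  unfolding qform3 herm_def of_real_diff cms by simp

lemma qform_scale: "qform (c *s u) = (cmod c)^2 * qform u"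
  by (simp add: qform3 norm_mult power_mult_distrib algebra_simps)

lemma norm_scale: "norm (c *s (u::complex^3)) = cmod c * norm u"
proof -
  have "(norm (c *s u))^2 = (cmod c * norm u)^2"
    by (simp add: norm3 norm_mult power_mult_distrib algebra_simps)
  then show ?thesis by (simp add: power2_eq_iff_nonneg)
qed

lemma hdot_sq_le: "(cmod (hdot u v))^2 \<le> (norm u)^2 * (norm v)^2"
proof -
  have "0 \<le> (cmod (u$0 * v$1 - u$1 * v$0))^2 + (cmod (u$0 * v$2 - u$2 * v$0))^2 + (cmod (u$1 * v$2 - u$2 * v$1))^2"
    by simp
  then show ?thesis using lag3[of u v] by linarith
qed

lemma hdot_le: "cmod (hdot u v) \<le> norm u * norm v"
proof -
  have "(cmod (hdot u v))^2 \<le> (norm u * norm v)^2"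
    using hdot_sq_le[of u v] by (simp add: power_mult_distrib)
  then show ?thesis by (rule power2_le_imp_le) auto
qed

definition Jm :: "complex^3 \<Rightarrow> complex^3" where
  "Jm v = (\<chi> i. if i = 0 then v$i else - v$i)"

lemma herm_Jm: "herm u v = hdot u (Jm v)"
  by (simp add: herm_def hdot3 Jm_def)

lemma norm_Jm: "norm (Jm v) = norm v"
proof -
  have "(norm (Jm v))^2 = (norm v)^2" by (simp add: norm3 Jm_def)
  then show ?thesis by (simp add: power2_eq_iff_nonneg)
qed

lemma herm_le: "cmod (herm u v) \<le> norm u * norm v"
  using hdot_le[of u "Jm v"] by (simp add: herm_Jm norm_Jm)

lemma wedge_sq: "(wedge_norm u v)^2 = (norm u)^2 * (norm v)^2 - (cmod (hdot u v))^2"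
  unfolding wedge_norm_def using hdot_sq_le[of u v] by simp

lemma wedge_nonneg: "wedge_norm u v \<ge> 0" using hdot_sq_le[of u v] by (simp add: wedge_norm_def)

lemma wedge_sym: "wedge_norm v u = wedge_norm u v"
  by (simp add: wedge_norm_def cmod_hdot_sym mult.commute)

lemma wedge_le: "wedge_norm u v \<le> norm u * norm v"
proof -
  have "(wedge_norm u v)^2 \<le> (norm u * norm v)^2" by (simp add: wedge_sq power_mult_distrib)
  then show ?thesis by (rule power2_le_imp_le) auto
qed

lemma S3_facts:
  assumes "u \<in> S3"
  shows "(cmod (u$0))^2 = (cmod (u$1))^2 + (cmod (u$2))^2" "u$0 \<noteq> 0"
    "(norm u)^2 = 2 * (cmod (u$0))^2" "herm u u = 0" "u \<noteq> 0"
proof -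
  have q: "qform u = 0" "u \<noteq> 0" using assms by (auto simp: S3_def)
  show a: "(cmod (u$0))^2 = (cmod (u$1))^2 + (cmod (u$2))^2" using q by (simp add: qform3)
  show "u$0 \<noteq> 0"
  proof
    assume "u$0 = 0"
    then have "(cmod (u$1))^2 + (cmod (u$2))^2 = 0" using a by simp
    then have "(cmod (u$1))^2 = 0 \<and> (cmod (u$2))^2 = 0" by (simp add: add_nonneg_eq_0_iff)
    then have "u$1 = 0" "u$2 = 0" by auto
    then have "u = 0" using \<open>u$0 = 0\<close> by (simp add: vec3_eq)
    then show False using q by simp
  qed
  show "(norm u)^2 = 2 * (cmod (u$0))^2" using a by (simp add: norm3)
  show "herm u u = 0" using q by (simp add: herm_self)
  show "u \<noteq> 0" using q by simp
qed

lemma S3_cplx: assumes "u \<in> S3" shows "u$0 * cnj (u$0) = u$1 * cnj (u$1) + u$2 * cnj (u$2)"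
proof -
  have "complex_of_real ((cmod (u$0))^2) = complex_of_real ((cmod (u$1))^2 + (cmod (u$2))^2)"
    using S3_facts(1)[OF assms] by simp
  then show ?thesis by (simp only: of_real_add cms)
qed

lemma propA_core:
  fixes x0 x1 x2 y0 y1 y2 :: complex
  assumes n: "x0*cnj x0 = x1*cnj x1 + x2*cnj x2" and h: "x0*cnj y0 = x1*cnj y1 + x2*cnj y2"
    and m: "x1*y2 = x2*y1" and x0: "x0 \<noteq> 0"
  shows "x0*y1 = y0*x1" "x0*y2 = y0*x2"
proof -
  have hc: "cnj x0 * y0 = cnj x1 * y1 + cnj x2 * y2"
    using arg_cong[OF h, of cnj] by simp
  have "cnj x0 * (y0 * x1) = x1 * (cnj x0 * y0)" by (simp add: ac_simps)
  also have "\<dots> = x1 * (cnj x1 * y1 + cnj x2 * y2)" by (simp only: hc)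
  also have "\<dots> = x1*cnj x1*y1 + cnj x2 * (x1*y2)" by (simp add: algebra_simps)
  also have "\<dots> = x1*cnj x1*y1 + cnj x2 * (x2*y1)" by (simp only: m)
  also have "\<dots> = (x1*cnj x1 + x2*cnj x2) * y1" by (simp add: algebra_simps)
  also have "\<dots> = (x0*cnj x0) * y1" by (simp only: n)
  also have "\<dots> = cnj x0 * (x0 * y1)" by (simp add: ac_simps)
  finally show "x0*y1 = y0*x1" using x0 by simp
  have "cnj x0 * (y0 * x2) = x2 * (cnj x0 * y0)" by (simp add: ac_simps)
  also have "\<dots> = x2 * (cnj x1 * y1 + cnj x2 * y2)" by (simp only: hc)
  also have "\<dots> = x2*cnj x2*y2 + cnj x1 * (x2*y1)" by (simp add: algebra_simps)
  also have "\<dots> = x2*cnj x2*y2 + cnj x1 * (x1*y2)" by (simp only: m[symmetric])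
  also have "\<dots> = (x1*cnj x1 + x2*cnj x2) * y2" by (simp add: algebra_simps)
  also have "\<dots> = (x0*cnj x0) * y2" by (simp only: n)
  also have "\<dots> = cnj x0 * (x0 * y2)" by (simp add: ac_simps)
  finally show "x0*y2 = y0*x2" using x0 by simp
qed

lemma null_orth_prop:
  assumes x: "x \<in> S3" and y: "y \<in> S3" and h: "herm x y = 0"
  shows "proj_eq x y"
proof -
  have h': "x$0 * cnj (y$0) = x$1 * cnj (y$1) + x$2 * cnj (y$2)" using h by (simp add: herm_def diff_eq_eq ac_simps)
  have "(cmod (x$0 * cnj (y$0)))^2 = ((cmod (x$1))^2 + (cmod (x$2))^2) * ((cmod (y$1))^2 + (cmod (y$2))^2)"
    using S3_facts(1)[OF x] S3_facts(1)[OF y] by (simp add: norm_mult power_mult_distrib)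
  then have "(cmod (x$1 * y$2 - x$2 * y$1))^2 = 0" using lag2[of "x$1" "x$2" "y$1" "y$2"] h' by simp
  then have m: "x$1 * y$2 = x$2 * y$1" by simp
  note c = propA_core[OF S3_cplx[OF x] h' m S3_facts(2)[OF x]]
  have x0: "x$0 \<noteq> 0" using S3_facts(2)[OF x] .
  have "(y$0/x$0) * x$1 = (x$0*y$1)/x$0" using c(1) by simp
  also have "\<dots> = y$1" using x0 by simp
  finally have e1: "(y$0/x$0) * x$1 = y$1" .
  have "(y$0/x$0) * x$2 = (x$0*y$2)/x$0" using c(2) by simp
  also have "\<dots> = y$2" using x0 by simp
  finally have e2: "(y$0/x$0) * x$2 = y$2" .
  have e0: "(y$0/x$0) * x$0 = y$0" using x0 by simp
  have "y = (y$0 / x$0) *s x"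
    unfolding vec3_eq using e0 e1 e2 by simp
  moreover have "y$0 / x$0 \<noteq> 0" using S3_facts(2)[OF x] S3_facts(2)[OF y] by simp
  ultimately show ?thesis unfolding proj_eq_def by blast
qed

lemma null_orth_nonpos:
  assumes x: "x \<in> S3" and h: "herm m x = 0"
  shows "qform m \<le> 0"
proof -
  have h': "m$0 * cnj (x$0) = m$1 * cnj (x$1) + m$2 * cnj (x$2)" using h by (simp add: herm_def diff_eq_eq ac_simps)
  have "(cmod (m$0))^2 * (cmod (x$0))^2 = (cmod (m$1 * cnj (x$1) + m$2 * cnj (x$2)))^2"
  proof -
    have "cmod (m$0 * cnj (x$0)) = cmod (m$1 * cnj (x$1) + m$2 * cnj (x$2))" using h' by simp
    moreover have "(cmod (m$0))^2 * (cmod (x$0))^2 = (cmod (m$0 * cnj (x$0)))^2"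
      by (simp add: norm_mult power_mult_distrib)
    ultimately show ?thesis by simp
  qed
  also have "\<dots> \<le> ((cmod (m$1))^2 + (cmod (m$2))^2) * ((cmod (x$1))^2 + (cmod (x$2))^2)"
    using lag2[of "m$1" "m$2" "x$1" "x$2"] by simp
  also have "\<dots> = ((cmod (m$1))^2 + (cmod (m$2))^2) * (cmod (x$0))^2"
    using S3_facts(1)[OF x] by simp
  finally have "(cmod (m$0))^2 \<le> (cmod (m$1))^2 + (cmod (m$2))^2"
    using S3_facts(2)[OF x] by simp
  then show ?thesis by (simp add: qform3)
qed

lemma null_wedge:
  assumes y: "y \<in> S3" and z: "z \<in> S3"
  shows "(wedge_norm y z)^2 \<le> 2 * norm y * norm z * cmod (herm y z)"
proof -
  define A where "A = y$0 * cnj (z$0)"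
  define B where "B = y$1 * cnj (z$1) + y$2 * cnj (z$2)"
  define r where "r = cmod (y$0) * cmod (z$0)"
  have r0: "r \<ge> 0" by (simp add: r_def)
  have hd: "hdot y z = A + B" by (simp add: hdot3 A_def B_def)
  have hm: "herm y z = A - B" by (simp add: herm_def A_def B_def)
  have cA: "cmod A = r" by (simp add: A_def r_def norm_mult)
  have "(cmod B)^2 \<le> ((cmod (y$1))^2 + (cmod (y$2))^2) * ((cmod (z$1))^2 + (cmod (z$2))^2)"
    using lag2[of "y$1" "y$2" "z$1" "z$2"] by (simp add: B_def)
  also have "\<dots> = r^2" using S3_facts(1)[OF y] S3_facts(1)[OF z] by (simp add: r_def power_mult_distrib)
  finally have "cmod B \<le> r" using r0 by (rule power2_le_imp_le)
  have nn: "(norm y * norm z)^2 = (2*r)^2"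
    using S3_facts(3)[OF y] S3_facts(3)[OF z] by (simp add: r_def power_mult_distrib)
  have nn': "norm y * norm z = 2*r" using power2_eq_iff_nonneg[of "norm y * norm z" "2*r"] nn r0 by simp
  have tri: "2 * r \<le> cmod (A+B) + cmod (A-B)"
  proof -
    have "2 * r = cmod ((A+B) + (A-B))" using cA by (simp add: norm_mult)
    also have "\<dots> \<le> cmod (A+B) + cmod (A-B)" by (rule norm_triangle_ineq)
    finally show ?thesis .
  qed
  have "(wedge_norm y z)^2 = (2*r)^2 - (cmod (A+B))^2"
    using nn by (simp add: wedge_sq hd power_mult_distrib)
  also have "\<dots> \<le> 4 * r * cmod (A-B)"
  proof -
    let ?s = "cmod (A+B)" and ?t = "cmod (A-B)"
    have "?s \<ge> 0" "?t \<ge> 0" by auto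
    show ?thesis
    proof (cases "2*r \<ge> ?t")
      case True
      then have "(2*r - ?t)^2 \<le> ?s^2" using tri by (intro power_mono) auto
      moreover have "(2*r - ?t)^2 = (2*r)^2 - 4*r*?t + ?t^2" by (simp add: power2_eq_square algebra_simps)
      moreover have "?t^2 \<ge> 0" by simp
      ultimately show ?thesis by linarith
    next
      case False
      then have "r \<le> ?t" using r0 by linarith
      then have "4*r*r \<le> 4*r*?t" using r0 by (intro mult_left_mono) auto
      moreover have "(2*r)^2 = 4*r*r" by (simp add: power2_eq_square)
      moreover have "?s^2 \<ge> 0" by simp
      ultimately show ?thesis by linarith
    qed
  qed
  also have "\<dots> = 2 * norm y * norm z * cmod (herm y z)"
    using nn' by (simp add: hm)
  finally show ?thesis .
qed

lemma wedge_complex: "complex_of_real ((wedge_norm x y)^2) = hdot x x * hdot y y - hdot x y * hdot y x"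
  unfolding wedge_sq of_real_diff of_real_mult hdot_self[symmetric] cms
  by (simp add: hdot_sym[of y x])

lemma wedge_comb: "wedge_norm (a *s u + b *s v) u = cmod b * wedge_norm v u"
proof -
  have "complex_of_real ((wedge_norm (a *s u + b *s v) u)^2) = complex_of_real ((cmod b * wedge_norm v u)^2)"
    unfolding power_mult_distrib of_real_mult wedge_complex cms
    by (simp add: algebra_simps)
  then have "(wedge_norm (a *s u + b *s v) u)^2 = (cmod b * wedge_norm v u)^2"
    using of_real_eq_iff by blast
  then show ?thesis using wedge_nonneg by (simp add: power2_eq_iff_nonneg)
qed

lemma dist_line:
  assumes v: "v \<noteq> 0"
  shows "norm (u - (hdot u v / complex_of_real ((norm v)^2)) *s v) = wedge_norm u v / norm v"
proof -
  define l where "l = hdot u v / complex_of_real ((norm v)^2)"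
  have nv: "norm v > 0" using v by simp
  define h where "h = hdot u v"
  define N where "N = complex_of_real ((norm v)^2)"
  have N0: "N \<noteq> 0" using nv by (simp add: N_def)
  have cl: "cnj l = cnj h / N" by (simp add: l_def h_def N_def)
  have "complex_of_real ((norm (u - l *s v))^2) = hdot (u - l *s v) (u - l *s v)" by (simp add: hdot_self)
  also have "\<dots> = hdot u u - cnj l * h - l * cnj h + l * cnj l * N"
    by (simp add: algebra_simps h_def N_def hdot_self[of v] hdot_sym[of v u])
  also have "\<dots> = (hdot u u * N - h * cnj h) / N"
    using N0 unfolding cl by (simp add: l_def h_def[symmetric] N_def[symmetric] field_simps)
  also have "\<dots> = complex_of_real ((wedge_norm u v)^2) / N"
    unfolding wedge_complex by (simp add: h_def N_def hdot_self[of v] hdot_sym[of v u])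
  also have "\<dots> = complex_of_real ((wedge_norm u v / norm v)^2)"
    by (simp add: N_def power_divide)
  finally have "complex_of_real ((norm (u - l *s v))^2) = complex_of_real ((wedge_norm u v / norm v)^2)" .
  then have "(norm (u - l *s v))^2 = (wedge_norm u v / norm v)^2"
    using of_real_eq_iff by blast
  then show ?thesis unfolding l_def[symmetric] using wedge_nonneg[of u v] nv
    by (simp add: power2_eq_iff_nonneg)
qed

lemma perp_bound:
  assumes v: "v \<noteq> 0" and h: "herm v a = 0"
  shows "cmod (herm u a) \<le> wedge_norm u v / norm v * norm a"
proof -
  define l where "l = hdot u v / complex_of_real ((norm v)^2)"
  have "herm u a = herm (u - l *s v) a" using h by simp
  then have "cmod (herm u a) \<le> norm (u - l *s v) * norm a" using herm_le by metis
  then show ?thesis using dist_line[OF v, of u] by (simp add: l_def)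
qed

definition bdot :: "complex^3 \<Rightarrow> complex^3 \<Rightarrow> complex" where
  "bdot u v = u$0 * v$0 + u$1 * v$1 + u$2 * v$2"

definition bcross :: "complex^3 \<Rightarrow> complex^3 \<Rightarrow> complex^3" where
  "bcross a b = (\<chi> i. if i = 0 then a$1 * b$2 - a$2 * b$1 else if i = 1 then a$2 * b$0 - a$0 * b$2
     else a$0 * b$1 - a$1 * b$0)"

definition Jc :: "complex^3 \<Rightarrow> complex^3" where
  "Jc v = (\<chi> i. if i = 0 then cnj (v$i) else - cnj (v$i))"

definition par :: "complex^3 \<Rightarrow> complex^3 \<Rightarrow> bool" where
  "par u n \<longleftrightarrow> u$0*n$1 = u$1*n$0 \<and> u$0*n$2 = u$2*n$0 \<and> u$1*n$2 = u$2*n$1"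

lemma bcross_comp: "bcross a b $ 0 = a$1 * b$2 - a$2 * b$1" "bcross a b $ 1 = a$2 * b$0 - a$0 * b$2"
  "bcross a b $ 2 = a$0 * b$1 - a$1 * b$0"
  by (simp_all add: bcross_def)

lemma Jc_comp: "Jc v $ 0 = cnj (v$0)" "Jc v $ 1 = - cnj (v$1)" "Jc v $ 2 = - cnj (v$2)"
  by (simp_all add: Jc_def)

lemma herm_bdot: "herm u v = bdot u (Jc v)"
  by (simp add: herm_def bdot_def Jc_comp)

lemma par_scale:
  assumes p: "par u n" and n: "n \<noteq> 0"
  shows "u = (hdot u n / hdot n n) *s n"
proof -
  have nn: "hdot n n \<noteq> 0" using n by (simp add: hdot_self)
  have m: "u$0*n$1 = u$1*n$0" "u$0*n$2 = u$2*n$0" "u$1*n$2 = u$2*n$1" using p by (auto simp: par_def)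
  have e0: "u$0 * hdot n n = hdot u n * n$0"
  proof -
    have "u$0 * hdot n n - hdot u n * n$0 = cnj (n$1) * (u$0*n$1 - u$1*n$0) + cnj (n$2) * (u$0*n$2 - u$2*n$0)"
      by (simp add: hdot3 algebra_simps)
    then show ?thesis using m by simp
  qed
  have e1: "u$1 * hdot n n = hdot u n * n$1"
  proof -
    have "u$1 * hdot n n - hdot u n * n$1 = cnj (n$0) * (u$1*n$0 - u$0*n$1) + cnj (n$2) * (u$1*n$2 - u$2*n$1)"
      by (simp add: hdot3 algebra_simps)
    then show ?thesis using m by simp
  qed
  have e2: "u$2 * hdot n n = hdot u n * n$2"
  proof -
    have "u$2 * hdot n n - hdot u n * n$2 = cnj (n$0) * (u$2*n$0 - u$0*n$2) + cnj (n$1) * (u$2*n$1 - u$1*n$2)"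
      by (simp add: hdot3 algebra_simps)
    then show ?thesis using m by simp
  qed
  show ?thesis using e0 e1 e2 nn by (simp add: vec3_eq field_simps)
qed

lemma triple_par:
  assumes "bdot u a = 0" "bdot u b = 0"
  shows "par u (bcross a b)"
proof -
  have "u$1 * bcross a b $ 2 - u$2 * bcross a b $ 1 = a$0 * bdot u b - b$0 * bdot u a"
    "u$2 * bcross a b $ 0 - u$0 * bcross a b $ 2 = a$1 * bdot u b - b$1 * bdot u a"
    "u$0 * bcross a b $ 1 - u$1 * bcross a b $ 0 = a$2 * bdot u b - b$2 * bdot u a"
    by (simp_all add: bcross_comp bdot_def algebra_simps)
  then show ?thesis using assms unfolding par_def by (simp add: algebra_simps)
qed

lemma cross0_par: "bcross a b = 0 \<Longrightarrow> par b a"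
  by (simp add: vec3_eq bcross_comp par_def algebra_simps)

lemma span_lemma:
  assumes x: "x \<in> S3" and wx: "herm w x = 0" and qw: "qform w < 0"
    and rx: "herm r x = 0" and rw: "herm r w = 0"
  shows "\<exists>c. r = c *s x"
proof -
  define a where "a = Jc x"
  define b where "b = Jc w"
  define n where "n = bcross a b"
  have x0: "x \<noteq> 0" using S3_facts(5)[OF x] .
  have "n \<noteq> 0"
  proof
    assume "n = 0"
    then have pba: "par b a" unfolding n_def by (rule cross0_par)
    have a0: "a \<noteq> 0" using x0 by (auto simp: a_def vec3_eq Jc_comp)
    define c where "c = hdot b a / hdot a a"
    have "b = c *s a" using par_scale[OF pba a0] by (simp add: c_def)
    then have e: "cnj (w$0) = c * cnj (x$0)" "cnj (w$1) = c * cnj (x$1)" "cnj (w$2) = c * cnj (x$2)"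
      by (simp_all add: a_def b_def vec3_eq Jc_comp)
    have "w = cnj c *s x"
      unfolding vec3_eq using arg_cong[OF e(1), of cnj] arg_cong[OF e(2), of cnj] arg_cong[OF e(3), of cnj]
      by simp
    then have "qform w = (cmod c)^2 * qform x" by (simp add: qform_scale)
    then show False using qw x by (simp add: S3_def)
  qed
  have "herm x x = 0" using S3_facts(4)[OF x] .
  have "herm x w = 0" using wx herm_sym[of x w] by simp
  have px: "par x n" unfolding n_def a_def b_def
    by (rule triple_par) (use \<open>herm x x = 0\<close> \<open>herm x w = 0\<close> in \<open>simp_all add: herm_bdot\<close>)
  have pr: "par r n" unfolding n_def a_def b_def
    by (rule triple_par) (use rx rw in \<open>simp_all add: herm_bdot\<close>)
  define c1 where "c1 = hdot x n / hdot n n"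
  define c2 where "c2 = hdot r n / hdot n n"
  have ex: "x = c1 *s n" using par_scale[OF px \<open>n \<noteq> 0\<close>] by (simp add: c1_def)
  have er: "r = c2 *s n" using par_scale[OF pr \<open>n \<noteq> 0\<close>] by (simp add: c2_def)
  have "c1 \<noteq> 0" using ex x0 by auto
  then have "r = (c2 / c1) *s x" using ex er by (simp add: vec3_eq)
  then show ?thesis by blast
qed

lemma chain_nonempty: "x \<in> chain w \<Longrightarrow> chain w \<noteq> {}" by auto

lemma dvis_nonneg: "dvis u v \<ge> 0" by (simp add: dvis_def)

lemma dvis_lower:
  assumes y: "y \<in> S3" and z: "z \<in> chain w" and w0: "w \<noteq> 0"
  shows "cmod (herm y w) / (sqrt 2 * norm y * norm w) \<le> dvis y z"
proof -
  have zS: "z \<in> S3" and zw: "herm z w = 0" using z by (auto simp: chain_def)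
  have z0: "z \<noteq> 0" using S3_facts(5)[OF zS] .
  have y0: "y \<noteq> 0" using S3_facts(5)[OF y] .
  have nz: "norm z > 0" "norm y > 0" "norm w > 0" using z0 y0 w0 by auto
  have pb: "cmod (herm y w) \<le> wedge_norm y z / norm z * norm w" by (rule perp_bound[OF z0 zw])
  then have "cmod (herm y w) * norm z \<le> wedge_norm y z * norm w" using nz by (simp add: field_simps)
  then have "(cmod (herm y w) * norm z)^2 \<le> (wedge_norm y z * norm w)^2"
    by (intro power_mono) auto
  also have "\<dots> \<le> 2 * norm y * norm z * cmod (herm y z) * (norm w)^2"
    using null_wedge[OF y zS] by (simp add: power_mult_distrib mult_right_mono)
  finally have key: "(cmod (herm y w))^2 * norm z \<le> 2 * norm y * cmod (herm y z) * (norm w)^2"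
    using nz by (simp add: power2_eq_square algebra_simps)
  have "(cmod (herm y w) / (sqrt 2 * norm y * norm w))^2 = (cmod (herm y w))^2 / (2 * (norm y)^2 * (norm w)^2)"
    by (simp add: power_divide power_mult_distrib)
  also have "\<dots> \<le> cmod (herm y z) / (norm y * norm z)"
    using key nz by (simp add: field_simps power2_eq_square)
  finally show ?thesis unfolding dvis_def by (rule real_le_rsqrt)
qed

lemma dist_chain_lower:
  assumes y: "y \<in> S3" and x: "x \<in> chain w" and w0: "w \<noteq> 0"
  shows "cmod (herm y w) / (sqrt 2 * norm y * norm w) \<le> dist_chain y w"
  unfolding dist_chain_def
  by (rule cINF_greatest) (use x dvis_lower[OF y _ w0] in auto)

lemma dE_lower:
  assumes p0: "p \<noteq> 0" and py: "herm p y = 0" and y0: "y \<noteq> 0" and w0: "w \<noteq> 0"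
  shows "cmod (herm y w) / (norm y * norm w) \<le> dE p w"
proof -
  have "cmod (herm w y) \<le> wedge_norm w p / norm p * norm y" by (rule perp_bound[OF p0 py])
  then have "cmod (herm y w) / (norm y * norm w) \<le> wedge_norm p w / norm p / norm w"
    using y0 w0 by (simp add: cmod_herm_sym wedge_sym field_simps)
  then show ?thesis by (simp add: dE_def field_simps)
qed

lemma dE_upper:
  assumes x: "x \<in> S3" and wx: "herm w x = 0" and qw: "qform w < 0"
    and p0: "p \<noteq> 0" and px: "herm p x = 0" and py: "herm p y = 0" and g0: "herm x y \<noteq> 0"
  shows "dE p w * cmod (herm x y) * norm w \<le> cmod (herm y w) * norm x"
proof -
  define W where "W = herm w w"
  have W0: "W \<noteq> 0" using qw by (simp add: W_def herm_self)
  define al where "al = herm p w / W"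
  define r where "r = p - al *s w"
  have "herm r x = 0" using px wx by (simp add: r_def)
  moreover have "herm r w = 0" using W0 by (simp add: r_def al_def W_def)
  ultimately obtain c where rc: "r = c *s x" using span_lemma[OF x wx qw] by blast
  have pe: "p = al *s w + c *s x" using rc unfolding r_def by (simp add: diff_eq_eq add.commute)
  define g where "g = herm x y"
  have "herm p y = al * herm w y + c * g" by (simp add: pe g_def)
  then have ceq: "c * g = - al * herm w y" using py by (simp add: algebra_simps add_eq_0_iff)
  have al0: "al \<noteq> 0"
  proof
    assume "al = 0"
    then have "c = 0" using ceq g0 by (simp add: g_def)
    then show False using p0 pe \<open>al = 0\<close> by simp
  qed
  have cm: "cmod c * cmod g = cmod al * cmod (herm y w)"
    using arg_cong[OF ceq, of cmod] by (simp add: norm_mult cmod_herm_sym)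
  have wpw: "wedge_norm p w = cmod c * wedge_norm x w" unfolding pe by (rule wedge_comb)
  have "wedge_norm p x = cmod al * wedge_norm w x"
    unfolding pe add.commute[of "al *s w"] by (rule wedge_comb)
  then have wpx: "cmod al * wedge_norm x w \<le> norm p * norm x"
    using wedge_le[of p x] wedge_sym[of w x] by simp
  have np: "norm p > 0" using p0 by simp
  have w0: "w \<noteq> 0" using qw by (auto simp: qform3)
  have nw: "norm w > 0" using w0 by simp
  have dEe: "dE p w * norm p * norm w = cmod c * wedge_norm x w"
    using np nw by (simp add: dE_def wpw)
  have "cmod al * (dE p w * norm p * norm w) \<le> cmod c * (norm p * norm x)"
    unfolding dEe using mult_left_mono[OF wpx, of "cmod c"] by (simp add: algebra_simps)
  then have "cmod al * (dE p w * norm w) \<le> cmod c * norm x"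
    using np by (simp add: algebra_simps)
  then have "cmod al * (dE p w * norm w) * cmod g \<le> cmod c * norm x * cmod g"
    by (simp add: mult_right_mono)
  also have "\<dots> = cmod al * (cmod (herm y w) * norm x)" using cm by (simp add: algebra_simps)
  finally have "cmod al * (dE p w * norm w * cmod g) \<le> cmod al * (cmod (herm y w) * norm x)"
    by (simp add: algebra_simps)
  then show ?thesis using al0 by (simp add: g_def algebra_simps)
qed

lemma chain_point:
  assumes x: "x \<in> S3" and y: "y \<in> S3" and qw: "qform w < 0" and xw: "herm x w = 0"
    and g0: "herm x y \<noteq> 0"
  shows "\<exists>z\<in>chain w. (dvis y z)^2 \<le> (cmod (herm y w))^2 * norm x / (2 * (- qform w) * norm y * cmod (herm x y))"
proof -
  define q where "q = qform w"
  define W where "W = herm w w"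
  have Wq: "W = complex_of_real q" by (simp add: W_def q_def herm_self)
  have W0: "W \<noteq> 0" using qw by (simp add: Wq q_def)
  have cW: "cnj W = W" by (simp add: Wq)
  define h where "h = herm y w"
  define g where "g = herm x y"
  define be where "be = h / W"
  define y' where "y' = y - be *s w"
  have wx: "herm w x = 0" using xw herm_sym[of w x] by simp
  have xx: "herm x x = 0" using S3_facts(4)[OF x] .
  have yy: "herm y y = 0" using S3_facts(4)[OF y] .
  have cbe: "cnj be = cnj h / W" using cW by (simp add: be_def)
  have f1: "herm w y' = 0"
    using W0 by (simp add: y'_def cbe herm_sym[of w y] h_def W_def[symmetric])
  have f2: "herm y' w = 0"
    using W0 by (simp add: y'_def be_def h_def W_def[symmetric])
  have f3: "herm y y' = - (cnj h * h) / W"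
    using yy by (simp add: y'_def cbe h_def)
  have f4: "herm y' y' = herm y y'"
  proof -
    have "herm (y - be *s w) y' = herm y y' - be * herm w y'" by simp
    then have "herm y' y' = herm y y' - be * herm w y'" by (simp only: y'_def[symmetric])
    then show ?thesis using f1 by simp
  qed
  define Q where "Q = qform y'"
  have Qc: "complex_of_real Q = - (cnj h * h) / W" using f4 f3 by (simp add: Q_def herm_self)
  have Qv: "Q = (cmod h)^2 / (- q)"
  proof -
    have "complex_of_real Q = complex_of_real ((cmod h)^2 / (- q))"
      unfolding Qc of_real_divide cms Wq by (simp add: field_simps)
    then show ?thesis using of_real_eq_iff by blast
  qed
  have Q0: "Q \<ge> 0" using Qv qw by (simp add: q_def divide_nonneg_neg)
  have xy': "herm x y' = g" using xw by (simp add: y'_def g_def)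
  have y'x: "herm y' x = cnj g" using xy' herm_sym[of y' x] by simp
  define s where "s = - complex_of_real Q / (2 * g)"
  have sg: "s * g = - complex_of_real Q / 2" using g0 by (simp add: s_def g_def)
  have csg: "cnj s * cnj g = - complex_of_real Q / 2"
    using arg_cong[OF sg, of cnj] by simp
  define z where "z = y' + s *s x"
  have zw: "herm z w = 0" using f2 xw by (simp add: z_def)
  have zx: "herm z x = cnj g" using y'x xx by (simp add: z_def)
  have zz: "herm z z = 0"
  proof -
    have "herm z z = herm y' y' + cnj s * herm y' x + s * herm x y' + s * cnj s * herm x x"
      by (simp add: z_def algebra_simps)
    also have "\<dots> = complex_of_real Q + cnj s * cnj g + s * g"
      using xx xy' y'x by (simp add: Q_def herm_self)
    also have "\<dots> = 0" using sg csg by simp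
    finally show ?thesis .
  qed
  have yz: "herm y z = complex_of_real Q / 2"
  proof -
    have "herm y z = herm y y' + cnj s * herm y x" by (simp add: z_def)
    also have "\<dots> = complex_of_real Q + cnj s * cnj g"
      using f4 herm_sym[of y x] by (simp add: Q_def herm_self g_def)
    also have "\<dots> = complex_of_real Q / 2" using csg by simp
    finally show ?thesis .
  qed
  have z0: "z \<noteq> 0" using zx g0 by (auto simp: g_def)
  have zS: "z \<in> S3" using z0 zz by (simp add: S3_def qform_def)
  have zc: "z \<in> chain w" using zS zw by (simp add: chain_def)
  have ng: "cmod g \<le> norm z * norm x" using herm_le[of z x] zx by simp
  have nx: "norm x > 0" using S3_facts(5)[OF x] by simp
  have ny: "norm y > 0" using S3_facts(5)[OF y] by simp
  have nz: "norm z > 0" using z0 by simp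
  have gpos: "cmod g > 0" using g0 by (simp add: g_def)
  have cyz: "cmod (herm y z) = Q / 2" using Q0 by (simp add: yz)
  have "(dvis y z)^2 = (Q / 2) / (norm y * norm z)"
    unfolding dvis_def cyz using Q0 nz ny by simp
  also have "\<dots> \<le> (Q / 2) / (norm y * (cmod g / norm x))"
  proof (rule divide_left_mono)
    show "0 \<le> Q / 2" using Q0 by simp
    show "norm y * (cmod g / norm x) \<le> norm y * norm z"
      using ng nx ny by (intro mult_left_mono) (auto simp: field_simps)
    show "0 < norm y * norm z * (norm y * (cmod g / norm x))" using nx ny nz gpos by simp
  qed
  also have "\<dots> = (cmod h)^2 * norm x / (2 * (- q) * norm y * cmod g)"
    unfolding Qv using nx ny gpos qw by (simp add: field_simps q_def)
  finally show ?thesis using zc by (auto simp: h_def g_def q_def)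
qed

lemma cont_herm: "continuous_on S (\<lambda>p. herm (f p) (g p))" if "continuous_on S f" "continuous_on S g"
  unfolding herm_def using that by (intro continuous_intros) auto

lemma cont_qform: "continuous_on S (\<lambda>p. qform (f p))" if "continuous_on S f"
  unfolding qform_def using cont_herm[OF that that] by (intro continuous_intros)

lemma proj_eq_trans:
  assumes "proj_eq w x" "proj_eq w k" shows "proj_eq x k"
proof -
  obtain a where a: "a \<noteq> 0" "x = a *s w" using assms(1) by (auto simp: proj_eq_def)
  obtain b where b: "b \<noteq> 0" "k = b *s w" using assms(2) by (auto simp: proj_eq_def)
  have "k = (b / a) *s x" using a b by (simp add: vec3_eq)
  moreover have "b / a \<noteq> 0" using a b by simp
  ultimately show ?thesis unfolding proj_eq_def by blast
qed

lemma const1: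
  assumes ne1: "K1 \<noteq> {}" and ne2: "K2 \<noteq> {}" and c1: "compact K1" and c2: "compact K2"
    and s1: "K1 \<subseteq> S3" and s2: "K2 \<subseteq> S3" and dj: "\<forall>x\<in>K1. \<forall>y\<in>K2. \<not> proj_eq x y"
  shows "\<exists>c>0. c \<le> 1 \<and> (\<forall>x\<in>K1. \<forall>y\<in>K2. c * (norm x * norm y) \<le> cmod (herm x y))"
proof -
  define f where "f = (\<lambda>p::(complex^3) \<times> (complex^3). cmod (herm (fst p) (snd p)) / (norm (fst p) * norm (snd p)))"
  have nz: "\<And>p. p \<in> K1 \<times> K2 \<Longrightarrow> norm (fst p) * norm (snd p) \<noteq> 0"
    using s1 s2 S3_facts(5) by fastforce
  have cont: "continuous_on (K1 \<times> K2) f"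
    unfolding f_def
    by (rule continuous_on_divide[OF continuous_on_norm[OF cont_herm[OF continuous_on_fst[OF continuous_on_id] continuous_on_snd[OF continuous_on_id]]]
        continuous_on_mult[OF continuous_on_norm[OF continuous_on_fst[OF continuous_on_id]] continuous_on_norm[OF continuous_on_snd[OF continuous_on_id]]]])
      (use nz in auto)
  obtain p0 where p0: "p0 \<in> K1 \<times> K2" and pmin: "\<forall>p\<in>K1 \<times> K2. f p0 \<le> f p"
    using continuous_attains_inf[OF compact_Times[OF c1 c2] _ cont] ne1 ne2 by auto
  have "herm (fst p0) (snd p0) \<noteq> 0"
  proof
    assume H: "herm (fst p0) (snd p0) = 0"
    have "fst p0 \<in> S3" "snd p0 \<in> S3" using p0 s1 s2 by auto
    then have "proj_eq (fst p0) (snd p0)" using null_orth_prop H by blast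
    then show False using dj p0 by auto
  qed
  then have pos: "f p0 > 0" using nz[OF p0] by (simp add: f_def)
  have le1: "f p0 \<le> 1"
    using herm_le[of "fst p0" "snd p0"] nz[OF p0] by (simp add: f_def divide_le_eq_1)
  have "\<forall>x\<in>K1. \<forall>y\<in>K2. f p0 * (norm x * norm y) \<le> cmod (herm x y)"
  proof (intro ballI)
    fix x y assume xy: "x \<in> K1" "y \<in> K2"
    then have "f p0 \<le> f (x, y)" using pmin by auto
    moreover have "norm x * norm y > 0" using nz[of "(x,y)"] xy by simp
    ultimately show "f p0 * (norm x * norm y) \<le> cmod (herm x y)"
      by (simp add: f_def pos_le_divide_eq)
  qed
  then show ?thesis using pos le1 by blast
qed

lemma const2:
  assumes c1: "compact K1" and c2: "compact K2"
    and s1: "K1 \<subseteq> S3" and s2: "K2 \<subseteq> S3" and dj: "\<forall>x\<in>K1. \<forall>y\<in>K2. \<not> proj_eq x y"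
  shows "\<exists>c>0. c \<le> 1 \<and> (\<forall>w x k. x \<in> K1 \<longrightarrow> k \<in> K2 \<longrightarrow> herm w x = 0 \<longrightarrow> herm w k = 0 \<longrightarrow>
           qform w < 0 \<longrightarrow> c * (norm w)^2 \<le> - qform w)"
proof -
  define T where "T = (sphere (0::complex^3) 1 \<times> (K1 \<times> K2)) \<inter> {p. herm (fst p) (fst (snd p)) = 0}
      \<inter> {p. herm (fst p) (snd (snd p)) = 0}"
  have cf: "continuous_on UNIV (\<lambda>p::(complex^3) \<times> (complex^3) \<times> (complex^3). fst p)"
    by (rule continuous_on_fst[OF continuous_on_id])
  have cs1: "continuous_on UNIV (\<lambda>p::(complex^3) \<times> (complex^3) \<times> (complex^3). fst (snd p))"
    by (rule continuous_on_fst[OF continuous_on_snd[OF continuous_on_id]])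
  have cs2: "continuous_on UNIV (\<lambda>p::(complex^3) \<times> (complex^3) \<times> (complex^3). snd (snd p))"
    by (rule continuous_on_snd[OF continuous_on_snd[OF continuous_on_id]])
  have cl1: "closed {p::(complex^3) \<times> (complex^3) \<times> (complex^3). herm (fst p) (fst (snd p)) = 0}"
    by (rule closed_Collect_eq[OF cont_herm[OF cf cs1] continuous_on_const])
  have cl2: "closed {p::(complex^3) \<times> (complex^3) \<times> (complex^3). herm (fst p) (snd (snd p)) = 0}"
    by (rule closed_Collect_eq[OF cont_herm[OF cf cs2] continuous_on_const])
  have cT: "compact T"
    unfolding T_def
    by (rule compact_Int_closed[OF compact_Int_closed[OF compact_Times[OF compact_sphere compact_Times[OF c1 c2]] cl1] cl2])
  show ?thesis
  proof (cases "T = {}")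
    case True
    have "\<forall>w x k. x \<in> K1 \<longrightarrow> k \<in> K2 \<longrightarrow> herm w x = 0 \<longrightarrow> herm w k = 0 \<longrightarrow>
           qform w < 0 \<longrightarrow> 1 * (norm w)^2 \<le> - qform w"
    proof (intro allI impI)
      fix w x k assume h: "x \<in> K1" "k \<in> K2" "herm w x = 0" "herm w k = 0" "qform w < 0"
      have w0: "w \<noteq> 0" using h(5) by (auto simp: qform3)
      define u where "u = complex_of_real (1 / norm w) *s w"
      have "norm u = 1" using w0 by (simp add: u_def norm_scale norm_divide)
      then have "(u, x, k) \<in> T" using h by (simp add: T_def u_def)
      then show "1 * (norm w)^2 \<le> - qform w" using True by simp
    qed
    then show ?thesis by (intro exI[of _ 1]) auto
  next
    case False
    have cont: "continuous_on T (\<lambda>p. - qform (fst p))"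
      by (rule continuous_on_minus[OF cont_qform[OF continuous_on_fst[OF continuous_on_id]]])
    obtain p0 where p0: "p0 \<in> T" and pmin: "\<forall>p\<in>T. - qform (fst p0) \<le> - qform (fst p)"
      using continuous_attains_inf[OF cT False cont] by auto
    define m where "m = - qform (fst p0)"
    obtain w0 x0 k0 where pe: "p0 = (w0, x0, k0)" by (cases p0) auto
    have hp: "norm w0 = 1" "x0 \<in> K1" "k0 \<in> K2" "herm w0 x0 = 0" "herm w0 k0 = 0"
      using p0 by (auto simp: T_def pe)
    have mpos: "m > 0"
    proof (rule ccontr)
      assume "\<not> m > 0"
      then have "qform w0 \<ge> 0" by (simp add: m_def pe)
      moreover have "qform w0 \<le> 0" using null_orth_nonpos[of x0 w0] hp s1 by auto
      ultimately have "qform w0 = 0" by simp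
      moreover have "w0 \<noteq> 0" using hp by auto
      ultimately have wS: "w0 \<in> S3" by (simp add: S3_def)
      have "proj_eq w0 x0" using null_orth_prop[OF wS _ hp(4)] hp s1 by auto
      moreover have "proj_eq w0 k0" using null_orth_prop[OF wS _ hp(5)] hp s2 by auto
      ultimately have "proj_eq x0 k0" by (rule proj_eq_trans)
      then show False using dj hp by auto
    qed
    have mle: "m \<le> 1"
    proof -
      have "- qform w0 \<le> (norm w0)^2" by (simp add: qform3 norm3)
      then show ?thesis using hp by (simp add: m_def pe)
    qed
    have "\<forall>w x k. x \<in> K1 \<longrightarrow> k \<in> K2 \<longrightarrow> herm w x = 0 \<longrightarrow> herm w k = 0 \<longrightarrow>
           qform w < 0 \<longrightarrow> m * (norm w)^2 \<le> - qform w"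
    proof (intro allI impI)
      fix w x k assume h: "x \<in> K1" "k \<in> K2" "herm w x = 0" "herm w k = 0" "qform w < 0"
      have w0: "w \<noteq> 0" using h(5) by (auto simp: qform3)
      define u where "u = complex_of_real (1 / norm w) *s w"
      have "norm u = 1" using w0 by (simp add: u_def norm_scale norm_divide)
      then have "(u, x, k) \<in> T" using h by (simp add: T_def u_def)
      then have "m \<le> - qform u" using bspec[OF pmin] by (force simp: m_def)
      also have "\<dots> = - qform w / (norm w)^2" by (simp add: u_def qform_scale power_divide norm_divide)
      finally have A: "m \<le> - qform w / (norm w)^2" .
      have npos: "(norm w)^2 > 0" using w0 by simp
      have "m * (norm w)^2 \<le> (- qform w / (norm w)^2) * (norm w)^2" using A by (rule mult_right_mono) simp
      also have "\<dots> = - qform w" using npos by simp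
      finally show "m * (norm w)^2 \<le> - qform w" .
    qed
    then show ?thesis using mpos mle by blast
  qed
qed

lemma final_arith:
  fixes D E h c1 c2 :: real
  assumes c1: "0 < c1" "c1 \<le> 1" and c2: "0 < c2" "c2 \<le> 1" and h0: "h \<ge> 0" and D0: "D \<ge> 0"
    and a: "h / sqrt 2 \<le> D" and b: "D^2 \<le> h^2 / (2 * c1 * c2)" and c: "h \<le> E" and d: "E \<le> h / c1"
  shows "D / (2 / (c1 * c2)) \<le> E \<and> E \<le> (2 / (c1 * c2)) * D"
proof
  define t where "t = c1 * c2"
  have t0: "0 < t" "t \<le> 1" using c1 c2 by (auto simp: t_def mult_le_one)
  have "D^2 \<le> h^2 / (2 * t)" using b by (simp add: t_def mult.assoc)
  also have "\<dots> \<le> (2 / t * h)^2"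
  proof -
    have "1 / (2 * t) \<le> 4 / t^2" using t0 by (simp add: field_simps power2_eq_square)
    then have "h^2 * (1 / (2 * t)) \<le> h^2 * (4 / t^2)" by (intro mult_left_mono) auto
    then show ?thesis by (simp add: power_mult_distrib power_divide)
  qed
  finally have "D \<le> 2 / t * h" by (rule power2_le_imp_le) (use t0 h0 in auto)
  then have "D / (2 / t) \<le> h" using t0 by (simp add: field_simps)
  then show "D / (2 / (c1 * c2)) \<le> E" using c by (simp add: t_def)
  have s2: "sqrt 2 \<le> 2" using real_sqrt_le_iff[of 2 4] by simp
  have s0: "sqrt 2 > 0" by simp
  have hD: "h \<le> sqrt 2 * D" using a s0 by (simp add: field_simps)
  have "E \<le> h / c1" by (rule d)
  also have "\<dots> \<le> sqrt 2 * D / c1" using hD c1 by (simp add: divide_right_mono)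
  also have "\<dots> \<le> 2 / c2 * D / c1"
  proof -
    have "sqrt 2 * c2 \<le> 2 * 1" using s2 c2 by (intro mult_mono) auto
    then have "sqrt 2 \<le> 2 / c2" using c2 by (simp add: field_simps)
    then show ?thesis using D0 c1 by (intro divide_right_mono mult_right_mono) auto
  qed
  also have "\<dots> = (2 / (c1 * c2)) * D" by (simp add: field_simps)
  finally show "E \<le> (2 / (c1 * c2)) * D" .
qed

lemma pointwise:
  assumes c1: "c1 > 0" "c1 \<le> 1" and c2: "c2 > 0" "c2 \<le> 1"
    and x: "x \<in> S3" and y: "y \<in> S3" and qw: "qform w < 0" and xc: "x \<in> chain w"
    and g1: "c1 * (norm x * norm y) \<le> cmod (herm x y)"
    and q2: "c2 * (norm w)^2 \<le> - qform w"
    and pi: "is_pi x y p"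
  shows "dist_chain y w / (2 / (c1 * c2)) \<le> dE p w \<and> dE p w \<le> (2 / (c1 * c2)) * dist_chain y w"
proof -
  have xw: "herm x w = 0" using xc by (simp add: chain_def)
  have wx: "herm w x = 0" using xw herm_sym[of w x] by simp
  have p0: "p \<noteq> 0" and px: "herm p x = 0" and py: "herm p y = 0" using pi by (auto simp: is_pi_def)
  have w0: "w \<noteq> 0" using qw by (auto simp: qform3)
  have nx: "norm x > 0" using S3_facts(5)[OF x] by simp
  have ny: "norm y > 0" using S3_facts(5)[OF y] by simp
  have nw: "norm w > 0" using w0 by simp
  define g where "g = cmod (herm x y)"
  define hy where "hy = cmod (herm y w)"
  define h where "h = hy / (norm y * norm w)"
  define D where "D = dist_chain y w"
  have gpos: "g \<ge> c1 * (norm x * norm y)" using g1 by (simp add: g_def)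
  have gp: "g > 0" using gpos c1 nx ny by (smt (verit) mult_pos_pos)
  have g0: "herm x y \<noteq> 0" using gp by (auto simp: g_def)
  have h0: "h \<ge> 0" using ny nw by (simp add: h_def hy_def)
  have a: "h / sqrt 2 \<le> D"
    using dist_chain_lower[OF y xc w0] by (simp add: D_def h_def hy_def field_simps)
  have D0: "D \<ge> 0" using a h0 by (smt (verit) divide_nonneg_pos real_sqrt_gt_zero)
  obtain z where zc: "z \<in> chain w"
    and zb: "(dvis y z)^2 \<le> hy^2 * norm x / (2 * (- qform w) * norm y * g)"
    using chain_point[OF x y qw xw g0] by (auto simp: hy_def g_def)
  have "D \<le> dvis y z" unfolding D_def dist_chain_def
    by (rule cINF_lower[OF _ zc]) (auto intro: bdd_belowI[of _ 0] simp: dvis_nonneg)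
  then have "D^2 \<le> (dvis y z)^2" using D0 by (intro power_mono) auto
  also have "\<dots> \<le> hy^2 * norm x / (2 * (- qform w) * norm y * g)" by (rule zb)
  also have "\<dots> \<le> hy^2 * norm x / (2 * (c2 * (norm w)^2) * norm y * (c1 * (norm x * norm y)))"
  proof (rule divide_left_mono)
    show "0 \<le> hy^2 * norm x" using nx by simp
    show "2 * (c2 * (norm w)^2) * norm y * (c1 * (norm x * norm y)) \<le> 2 * (- qform w) * norm y * g"
      using q2 gpos ny c1 c2 nx nw qw
      by (intro mult_mono mult_right_mono mult_left_mono) (auto intro!: mult_nonpos_nonneg)
    show "0 < 2 * (- qform w) * norm y * g * (2 * (c2 * (norm w)^2) * norm y * (c1 * (norm x * norm y)))"
      by (intro mult_pos_pos) (use qw ny gp c1 c2 nx nw in auto)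
  qed
  also have "\<dots> = h^2 / (2 * c1 * c2)"
    using nx ny nw c1 c2 by (simp add: h_def field_simps power2_eq_square)
  finally have b: "D^2 \<le> h^2 / (2 * c1 * c2)" .
  have c: "h \<le> dE p w"
    using dE_lower[OF p0 py S3_facts(5)[OF y] w0] by (simp add: h_def hy_def)
  have du: "dE p w * g * norm w \<le> hy * norm x"
    using dE_upper[OF x wx qw p0 px py g0] by (simp add: g_def hy_def)
  have dE0: "dE p w \<ge> 0" using h0 c by simp
  have "dE p w * (c1 * (norm x * norm y)) * norm w \<le> dE p w * g * norm w"
    using gpos dE0 nw by (intro mult_right_mono mult_left_mono) auto
  also have "\<dots> \<le> hy * norm x" by (rule du)
  finally have "dE p w * (c1 * (norm x * norm y)) * norm w \<le> hy * norm x" .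
  then have d: "dE p w \<le> h / c1"
    using nx ny nw c1 by (simp add: h_def field_simps)
  show ?thesis using final_arith[OF c1 c2 h0 D0 a b c d] by (simp add: D_def)
qed

theorem lemma5p10:
  fixes K1 K2 :: "(complex^3) set"
  assumes "K1 \<noteq> {}" and "K2 \<noteq> {}"
    and "compact K1" and "compact K2"
    and "K1 \<subseteq> S3" and "K2 \<subseteq> S3"
    and "\<forall>x\<in>K1. \<forall>y\<in>K2. \<not> proj_eq x y"
  shows "\<exists>C::real. C \<ge> 1 \<and>
    (\<forall>x\<in>K1. \<forall>y\<in>K2. \<forall>w\<in>LC.
       x \<in> chain w \<and> (\<exists>k\<in>K2. k \<in> chain w) \<longrightarrow>
       (\<forall>p. is_pi x y p \<longrightarrow>
          dist_chain y w / C \<le> dE p w \<and> dE p w \<le> C * dist_chain y w))"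
proof -
  obtain c1 where c1: "c1 > 0" "c1 \<le> 1"
    and c1b: "\<forall>x\<in>K1. \<forall>y\<in>K2. c1 * (norm x * norm y) \<le> cmod (herm x y)"
    using const1[OF assms] by blast
  obtain c2 where c2: "c2 > 0" "c2 \<le> 1"
    and c2b: "\<forall>w x k. x \<in> K1 \<longrightarrow> k \<in> K2 \<longrightarrow> herm w x = 0 \<longrightarrow> herm w k = 0 \<longrightarrow>
           qform w < 0 \<longrightarrow> c2 * (norm w)^2 \<le> - qform w"
    using const2[OF assms(3-7)] by blast
  have C1: "1 \<le> 2 / (c1 * c2)"
  proof -
    have "c1 * c2 \<le> 1 * 1" using c1 c2 by (intro mult_mono) auto
    then show ?thesis using c1 c2 by (simp add: field_simps)
  qed
  have main: "dist_chain y w / (2 / (c1 * c2)) \<le> dE p w \<and> dE p w \<le> (2 / (c1 * c2)) * dist_chain y w"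
    if x: "x \<in> K1" and y: "y \<in> K2" and w: "w \<in> LC" and xc: "x \<in> chain w"
      and k: "k \<in> K2" "k \<in> chain w" and pi: "is_pi x y p" for x y w k p
  proof -
    have qw: "qform w < 0" using w by (simp add: LC_def)
    have xS: "x \<in> S3" using x assms(5) by auto
    have yS: "y \<in> S3" using y assms(6) by auto
    have wx: "herm w x = 0" using xc herm_sym[of w x] by (simp add: chain_def)
    have wk: "herm w k = 0" using k herm_sym[of w k] by (simp add: chain_def)
    have q2: "c2 * (norm w)^2 \<le> - qform w" using c2b x k wx wk qw by blast
    have g1: "c1 * (norm x * norm y) \<le> cmod (herm x y)" using c1b x y by blast
    show ?thesis by (rule pointwise[OF c1 c2 xS yS qw xc g1 q2 pi])
  qed
  show ?thesis
    by (rule exI[of _ "2 / (c1 * c2)"]) (use C1 main in blast)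
qed

end
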